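(* Let $H$ be a complex Hilbert space and let $P \in \mathcal{L}(H)$ be a positive operator (i.e. $\langle Px,x\rangle \ge 0$ for all $x\in H$). Then: (i) $P$ satisfies the property $\mathcal{N}^*$ if and only if $[P]$ is an eigenvalue of $P$; (ii) $P$ satisfies the property $\mathcal{N}^*$ if and only if $[P]$ is an extreme point of the numerical range $W(P)$.
   Context: $\mathcal{L}(H)$ is the space of bounded linear operators on $H$. For $T \in \mathcal{L}(H)$, $[T] := \inf_{\|x\| = 1} \|Tx\|$; $T$ satisfies the property $\mathcal{N}^*$ if there exists $x_0 \in H$ with $\|x_0\| = 1$ and $\|Tx_0\| = [T]$. The numerical range is $W(T) := \{\langle Tx, x\rangle : x \in H,\ \|x\| = 1\} \subset \mathbb{C}$ (a convex set). A point $\alpha$ of a convex set $A \subset \mathbb{C}$ is an extreme point of $A$ if $\alpha = t u + (1-t) v$ with $u, v \in A$, $0<t<1$ implies $\alpha = u = v$. *)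

theory Defs
  imports "HOL-Analysis.Analysis"
begin

class complex_vector = real_vector +
  fixes scaleC :: "complex \<Rightarrow> 'a \<Rightarrow> 'a" (infixr \<open>*\<^sub>C\<close> 75)
  assumes scaleC_add_right: "scaleC a (x + y) = scaleC a x + scaleC a y"
    and scaleC_add_left: "scaleC (a + b) x = scaleC a x + scaleC b x"
    and scaleC_scaleC: "scaleC a (scaleC b x) = scaleC (a * b) x"
    and scaleC_one: "scaleC 1 x = x"
    and scaleR_scaleC: "scaleR r x = scaleC (complex_of_real r) x"

class complex_normed_vector = complex_vector + real_normed_vector +
  assumes norm_scaleC: "norm (scaleC a x) = cmod a * norm x"

text \<open>Inner product, linear in the first argument, conjugate-linear in the second;
the norm is the one induced by the inner product.\<close>
class complex_inner = complex_normed_vector +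
  fixes cinner :: "'a \<Rightarrow> 'a \<Rightarrow> complex"
  assumes cinner_conj_sym: "cinner x y = cnj (cinner y x)"
    and cinner_add_left: "cinner (x + y) z = cinner x z + cinner y z"
    and cinner_scaleC_left: "cinner (scaleC a x) y = a * cinner x y"
    and cinner_nonneg: "0 \<le> Re (cinner x x)"
    and cinner_eq_zero_iff: "cinner x x = 0 \<longleftrightarrow> x = 0"
    and norm_eq_sqrt_cinner: "norm x = sqrt (Re (cinner x x))"

class chilbert_space = complex_inner + complete_space

definition bounded_clinear :: "('a::complex_normed_vector \<Rightarrow> 'b::complex_normed_vector) \<Rightarrow> bool" where
  "bounded_clinear T \<longleftrightarrow> bounded_linear T \<and> (\<forall>c x. T (c *\<^sub>C x) = c *\<^sub>C T x)"

definition positive_op :: "('a::complex_inner \<Rightarrow> 'a) \<Rightarrow> bool" where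
  "positive_op P \<longleftrightarrow> (\<forall>x. cinner (P x) x \<in> \<real> \<and> 0 \<le> Re (cinner (P x) x))"

definition lower_bound_op :: "('a::complex_inner \<Rightarrow> 'a) \<Rightarrow> real" where
  "lower_bound_op T = Inf {norm (T x) | x. norm x = 1}"

definition has_N_star :: "('a::complex_inner \<Rightarrow> 'a) \<Rightarrow> bool" where
  "has_N_star T \<longleftrightarrow> (\<exists>x0. norm x0 = 1 \<and> norm (T x0) = lower_bound_op T)"

definition is_eigenvalue :: "('a::complex_inner \<Rightarrow> 'a) \<Rightarrow> complex \<Rightarrow> bool" where
  "is_eigenvalue T mu \<longleftrightarrow> (\<exists>x. x \<noteq> 0 \<and> T x = mu *\<^sub>C x)"

definition numerical_range :: "('a::complex_inner \<Rightarrow> 'a) \<Rightarrow> complex set" where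
  "numerical_range T = {cinner (T x) x | x. norm x = 1}"

end

theory Submission
  imports Defs
begin

lemma cinner_zero_left[simp]: "cinner 0 y = 0"
  using cinner_add_left[of 0 0 y] by simp
lemma cinner_zero_right[simp]: "cinner x 0 = 0"
  by (metis cinner_conj_sym cinner_zero_left complex_cnj_zero)
lemma cinner_add_right: "cinner x (y + z) = cinner x y + cinner x z"
  by (metis cinner_add_left cinner_conj_sym complex_cnj_add)
lemma cinner_scaleC_right: "cinner x (a *\<^sub>C y) = cnj a * cinner x y"
  by (metis cinner_conj_sym cinner_scaleC_left complex_cnj_mult)
lemma cinner_scaleR_left: "cinner (r *\<^sub>R x) y = of_real r * cinner x y"
  by (simp add: scaleR_scaleC cinner_scaleC_left)
lemma cinner_scaleR_right: "cinner x (r *\<^sub>R y) = of_real r * cinner x y"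
  by (simp add: scaleR_scaleC cinner_scaleC_right)
lemma cinner_minus_left: "cinner (- x) y = - cinner x y"
  using cinner_scaleR_left[of "-1" x y] by simp
lemma cinner_minus_right: "cinner x (- y) = - cinner x y"
  using cinner_scaleR_right[of x "-1" y] by simp
lemma cinner_diff_left: "cinner (x - y) z = cinner x z - cinner y z"
  unfolding diff_conv_add_uminus by (simp only: cinner_add_left cinner_minus_left)
lemma cinner_diff_right: "cinner x (y - z) = cinner x y - cinner x z"
  unfolding diff_conv_add_uminus by (simp only: cinner_add_right cinner_minus_right)
lemma cinner_self: "cinner x x = complex_of_real ((norm x)^2)"
proof -
  have "Im (cinner x x) = 0" using cinner_conj_sym[of x x]
    by (metis Reals_cnj_iff complex_is_Real_iff)
  moreover have "Re (cinner x x) = (norm x)^2"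
    using norm_eq_sqrt_cinner[of x] cinner_nonneg[of x] by simp
  ultimately show ?thesis by (simp add: complex_eq_iff)
qed
lemma Re_cinner_sym: "Re (cinner y x) = Re (cinner x y)"
  by (subst cinner_conj_sym) simp

lemma Re_cinner_le: "Re (cinner u v) \<le> norm u * norm v"
proof -
  define a where "a = norm u"
  define b where "b = norm v"
  have "0 \<le> Re (cinner (b *\<^sub>R u - a *\<^sub>R v) (b *\<^sub>R u - a *\<^sub>R v))"
    by (rule cinner_nonneg)
  also have "\<dots> = b*b * Re (cinner u u) - a * b * Re (cinner u v) - a*b* Re (cinner v u) + a*a * Re (cinner v v)"
    by (simp add: cinner_diff_left cinner_diff_right cinner_scaleR_left cinner_scaleR_right algebra_simps)
  also have "\<dots> = b^2 * a^2 - 2 * a * b * Re (cinner u v) + a^2 * b^2"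
    by (simp add: cinner_self a_def b_def Re_cinner_sym[of v u] power2_eq_square algebra_simps)
  finally have "a * b * Re (cinner u v) \<le> a * b * (a * b)"
    by (simp add: power2_eq_square algebra_simps)
  moreover have "a \<ge> 0" "b \<ge> 0" by (auto simp: a_def b_def)
  ultimately show ?thesis
  proof (cases "a * b = 0")
    case True
    then have "u = 0 \<or> v = 0" by (auto simp: a_def b_def)
    then show ?thesis by auto
  next
    case False
    with \<open>a \<ge> 0\<close> \<open>b \<ge> 0\<close> have "a * b > 0" by simp
    with \<open>a * b * Re (cinner u v) \<le> a * b * (a * b)\<close> show ?thesis
      unfolding a_def b_def by (simp add: mult_le_cancel_left_pos)
  qed
qed


lemma pos_bound:
  fixes Q :: "'a::complex_inner \<Rightarrow> 'a"
  assumes bl: "bounded_linear Q" and sa: "\<And>u v. cinner (Q u) v = cinner u (Q v)"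
    and pos: "\<And>z. 0 \<le> Re (cinner (Q z) z)"
    and ub: "\<And>z. Re (cinner (Q z) z) \<le> K * (norm z)^2" and K: "K > 0"
  shows "(norm (Q x))^2 \<le> K * Re (cinner (Q x) x)"
proof -
  interpret Q: bounded_linear Q by fact
  define t where "t = 1 / K"
  define z where "z = x - t *\<^sub>R Q x"
  define N where "N = norm (Q x)"
  define R where "R = Re (cinner (Q x) x)"
  define D where "D = Re (cinner (Q (Q x)) (Q x))"
  have Qz: "Q z = Q x - t *\<^sub>R Q (Q x)"
    by (simp add: z_def Q.diff Q.scaleR)
  have "cinner (Q z) z = cinner (Q x) x - of_real t * cinner (Q x) (Q x)
      - of_real t * cinner (Q (Q x)) x + of_real t * of_real t * cinner (Q (Q x)) (Q x)"
    unfolding Qz unfolding z_def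
    by (simp add: cinner_diff_left cinner_diff_right cinner_scaleR_left cinner_scaleR_right algebra_simps)
  also have "cinner (Q (Q x)) x = cinner (Q x) (Q x)" by (rule sa)
  finally have "Re (cinner (Q z) z) = R - 2 * t * N^2 + t * t * D"
    by (simp add: R_def D_def N_def cinner_self)
  moreover have "D \<le> K * N^2" using ub[of "Q x"] by (simp add: D_def N_def)
  moreover have "t > 0" using K by (simp add: t_def)
  ultimately have "0 \<le> R - 2 * t * N^2 + t * t * (K * N^2)"
    using pos[of z] by (smt (verit) mult_left_mono mult_pos_pos)
  also have "t * t * (K * N^2) = t * N^2" using K by (simp add: t_def power2_eq_square)
  finally have "t * N^2 \<le> R" by simp
  then have "K * (t * N^2) \<le> K * R" using K by simp
  then show ?thesis using K by (simp add: t_def N_def R_def)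
qed

lemma selfadj:
  fixes P :: "'a::complex_inner \<Rightarrow> 'a"
  assumes "bounded_clinear P" "positive_op P"
  shows "cinner (P u) v = cinner u (P v)"
proof -
  have bl: "bounded_linear P" and cl: "\<And>c x. P (c *\<^sub>C x) = c *\<^sub>C P x"
    using assms(1) by (auto simp: bounded_clinear_def)
  have re: "\<And>x. Im (cinner (P x) x) = 0"
    using assms(2) by (auto simp: positive_op_def complex_is_Real_iff)
  interpret P: bounded_linear P by fact
  define a where "a = cinner (P v) u"
  define b where "b = cinner (P u) v"
  have "cinner (P (v + u)) (v + u) = cinner (P v) v + a + b + cinner (P u) u"
    by (simp add: P.add cinner_add_left cinner_add_right a_def b_def)
  then have 1: "Im a + Im b = 0" using re[of "v+u"] re[of u] re[of v] by simp
  have "cinner (P (v + \<i> *\<^sub>C u)) (v + \<i> *\<^sub>C u)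
      = cinner (P v) v - \<i> * a + \<i> * b + cinner (P u) u"
    by (simp add: P.add cl cinner_add_left cinner_add_right
        cinner_scaleC_left cinner_scaleC_right a_def b_def algebra_simps)
  then have 2: "Re b - Re a = 0" using re[of "v + \<i> *\<^sub>C u"] re[of u] re[of v] by simp
  have "b = cnj a" using 1 2 by (simp add: complex_eq_iff)
  then show ?thesis by (simp add: a_def b_def cinner_conj_sym[of u "P v"])
qed


theorem proposition2p6:
  fixes P :: "'a::chilbert_space \<Rightarrow> 'a"
  assumes "bounded_clinear P"
    and "positive_op P"
  shows "(has_N_star P \<longleftrightarrow> is_eigenvalue P (complex_of_real (lower_bound_op P)))
       \<and> (has_N_star P \<longleftrightarrow> complex_of_real (lower_bound_op P) extreme_point_of numerical_range P)"
proof -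
  have bl: "bounded_linear P" using assms(1) by (simp add: bounded_clinear_def)
  interpret P: bounded_linear P by fact
  have sa: "\<And>u v. cinner (P u) v = cinner u (P v)" using selfadj[OF assms] .
  have realP: "\<And>x. cinner (P x) x = complex_of_real (Re (cinner (P x) x))"
    using assms(2) by (auto simp: positive_op_def complex_eq_iff complex_is_Real_iff)
  have posP: "\<And>x. 0 \<le> Re (cinner (P x) x)"
    using assms(2) by (auto simp: positive_op_def)
  obtain B where B: "B > 0" "\<And>x. norm (P x) \<le> norm x * B" using P.pos_bounded by blast
  have ReP_le: "\<And>z. Re (cinner (P z) z) \<le> B * (norm z)^2"
  proof -
    fix z
    have "Re (cinner (P z) z) \<le> norm (P z) * norm z" by (rule Re_cinner_le)
    also have "\<dots> \<le> (norm z * B) * norm z" using B(2)[of z] by (simp add: mult_right_mono)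
    finally show "Re (cinner (P z) z) \<le> B * (norm z)^2" by (simp add: power2_eq_square algebra_simps)
  qed
  define m where "m = lower_bound_op P"
  define S where "S = {norm (P x) | x. norm x = 1}"
  have m_S: "m = Inf S" by (simp add: m_def S_def lower_bound_op_def)
  have bddS: "bdd_below S" unfolding S_def by (rule bdd_belowI[of _ 0]) auto
  have m_le: "\<And>x. norm x = 1 \<Longrightarrow> m \<le> norm (P x)"
    unfolding m_S by (rule cInf_lower[OF _ bddS]) (auto simp: S_def)
  have scale_unit: "\<And>x::'a. x \<noteq> 0 \<Longrightarrow> norm ((1 / norm x) *\<^sub>R x) = 1" by simp
  have m_nonneg: "0 \<le> m" if nt: "\<exists>x::'a. norm x = 1"
    unfolding m_S by (rule cInf_greatest) (use nt in \<open>auto simp: S_def\<close>)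
  have homog: "m * norm x \<le> norm (P x)" if nt: "\<exists>x::'a. norm x = 1" for x
  proof (cases "x = 0")
    case True then show ?thesis by simp
  next
    case False
    have "m \<le> norm (P ((1 / norm x) *\<^sub>R x))" using m_le scale_unit[OF False] by blast
    also have "\<dots> = norm (P x) / norm x" by (simp add: P.scaleR)
    finally show ?thesis using False by (simp add: pos_le_divide_eq)
  qed
  have Wbound: "m \<le> Re (cinner (P x) x)" if nt: "\<exists>x::'a. norm x = 1" and x: "norm x = 1" for x
  proof -
    define T where "T = {Re (cinner (P x) x) | x. norm x = 1}"
    define c where "c = Inf T"
    have bddT: "bdd_below T" unfolding T_def by (rule bdd_belowI[of _ 0]) (auto simp: posP)
    have neT: "T \<noteq> {}" using nt by (auto simp: T_def)
    have c_le: "\<And>x. norm x = 1 \<Longrightarrow> c \<le> Re (cinner (P x) x)"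
      unfolding c_def by (rule cInf_lower[OF _ bddT]) (auto simp: T_def)
    have c_nonneg: "0 \<le> c" unfolding c_def by (rule cInf_greatest[OF neT]) (auto simp: T_def posP)
    have c_hom: "c * (norm z)^2 \<le> Re (cinner (P z) z)" for z
    proof (cases "z = 0")
      case True then show ?thesis by simp
    next
      case False
      have "c \<le> Re (cinner (P ((1 / norm z) *\<^sub>R z)) ((1 / norm z) *\<^sub>R z))"
        using c_le scale_unit[OF False] by blast
      also have "\<dots> = Re (cinner (P z) z) / (norm z)^2"
        by (simp add: P.scaleR cinner_scaleR_left cinner_scaleR_right power2_eq_square)
      finally show ?thesis using False by (simp add: pos_le_divide_eq)
    qed
    define Q where "Q = (\<lambda>z. P z - c *\<^sub>R z)"
    have blQ: "bounded_linear Q" unfolding Q_def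
      by (intro bounded_linear_sub bl bounded_linear_scaleR_right bounded_linear_ident)
    have ReQ: "Re (cinner (Q z) z) = Re (cinner (P z) z) - c * (norm z)^2" for z
      by (simp add: Q_def cinner_diff_left cinner_scaleR_left cinner_self)
    have QQ: "(norm (Q z))^2 \<le> (B + 1) * Re (cinner (Q z) z)" for z
    proof (rule pos_bound[OF blQ])
      show "cinner (Q u) v = cinner u (Q v)" for u v
        by (simp add: Q_def cinner_diff_left cinner_diff_right cinner_scaleR_left cinner_scaleR_right sa)
      show "0 \<le> Re (cinner (Q z) z)" for z using c_hom[of z] ReQ[of z] by simp
      show "Re (cinner (Q z) z) \<le> (B + 1) * (norm z)^2" for z
        using ReQ[of z] ReP_le[of z] c_nonneg
        by (smt (verit) mult_nonneg_nonneg zero_le_power2 mult_right_mono)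
      show "B + 1 > 0" using B by simp
    qed
    have "m \<le> c"
    proof (rule ccontr)
      assume "\<not> m \<le> c"
      then have mc: "m - c > 0" by simp
      define e where "e = (m - c)^2 / (B + 1)"
      have e: "e > 0" using mc B by (simp add: e_def)
      have "Inf T < c + e" using e by (simp add: c_def)
      then obtain t where "t \<in> T" "t < c + e" using cInf_less_iff[OF neT bddT] by blast
      then obtain y where y: "norm y = 1" "Re (cinner (P y) y) < c + e" by (auto simp: T_def)
      have "P y = Q y + c *\<^sub>R y" by (simp add: Q_def)
      then have "norm (P y) \<le> norm (Q y) + c" using y(1) c_nonneg
        by (metis norm_triangle_ineq norm_scaleR abs_of_nonneg mult.right_neutral)
      moreover have "m \<le> norm (P y)" using m_le y(1) by blast
      ultimately have "m - c \<le> norm (Q y)" by simp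
      then have "(m - c)^2 \<le> (norm (Q y))^2" using mc by (simp add: power_mono)
      also have "\<dots> \<le> (B + 1) * Re (cinner (Q y) y)" by (rule QQ)
      also have "\<dots> = (B + 1) * (Re (cinner (P y) y) - c)" using ReQ[of y] y(1) by simp
      also have "\<dots> < (B + 1) * e" using y(2) B by simp
      also have "\<dots> = (m - c)^2" using B by (simp add: e_def)
      finally show False by simp
    qed
    then show ?thesis using c_le[OF x] by simp
  qed
  have eig_iff: "is_eigenvalue P (complex_of_real m) \<longleftrightarrow> (\<exists>x. x \<noteq> 0 \<and> P x = m *\<^sub>R x)"
    by (simp add: is_eigenvalue_def scaleR_scaleC)
  have N_iff: "has_N_star P \<longleftrightarrow> (\<exists>x. norm x = 1 \<and> norm (P x) = m)"
    by (simp add: has_N_star_def m_def)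
  have N_eig: "\<exists>x. x \<noteq> 0 \<and> P x = m *\<^sub>R x" if x0: "norm x0 = 1" "norm (P x0) = m" for x0
  proof -
    have nt: "\<exists>x::'a. norm x = 1" using x0 by blast
    define A where "A = (\<lambda>z. P (P z) - (m^2) *\<^sub>R z)"
    have blA: "bounded_linear A" unfolding A_def
      by (intro bounded_linear_sub bounded_linear_compose[OF bl bl] bounded_linear_scaleR_right bounded_linear_ident)
    have ReA: "Re (cinner (A z) z) = (norm (P z))^2 - m^2 * (norm z)^2" for z
      by (simp add: A_def cinner_diff_left cinner_scaleR_left sa[of "P z" z] cinner_self)
    have "(norm (A x0))^2 \<le> (B^2 + 1) * Re (cinner (A x0) x0)"
    proof (rule pos_bound[OF blA])
      show "cinner (A u) v = cinner u (A v)" for u v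
        by (simp add: A_def cinner_diff_left cinner_diff_right cinner_scaleR_left cinner_scaleR_right sa[of "P u" v] sa[of u "P v"])
      show "0 \<le> Re (cinner (A z) z)" for z
      proof -
        have "m * norm z \<le> norm (P z)" by (rule homog[OF nt])
        then have "(m * norm z)^2 \<le> (norm (P z))^2"
          using m_nonneg[OF nt] by (simp add: power_mono)
        then show ?thesis using ReA[of z] by (simp add: power_mult_distrib)
      qed
      show "Re (cinner (A z) z) \<le> (B^2 + 1) * (norm z)^2" for z
      proof -
        have "(norm (P z))^2 \<le> (norm z * B)^2" using B(2)[of z] by (simp add: power_mono)
        moreover have "(norm z * B)^2 = B^2 * (norm z)^2" by (simp add: power_mult_distrib)
        moreover have "0 \<le> m^2 * (norm z)^2" by simp
        moreover have "B^2 * (norm z)^2 \<le> (B^2 + 1) * (norm z)^2" by (rule mult_right_mono) simp_all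
        ultimately show ?thesis using ReA[of z] by linarith
      qed
      show "B^2 + 1 > 0" using zero_le_power2[of B] by linarith
    qed
    also have "Re (cinner (A x0) x0) = 0" using ReA[of x0] x0 by simp
    finally have "A x0 = 0" by simp
    then have PP: "P (P x0) = (m^2) *\<^sub>R x0" by (simp add: A_def)
    define y where "y = P x0 + m *\<^sub>R x0"
    have Py1: "P y = m^2 *\<^sub>R x0 + m *\<^sub>R P x0" by (simp add: y_def P.add P.scaleR PP)
    have Py2: "m *\<^sub>R y = m *\<^sub>R P x0 + (m * m) *\<^sub>R x0" by (simp add: y_def scaleR_add_right)
    have Py: "P y = m *\<^sub>R y" unfolding Py1 Py2 by (simp add: power2_eq_square add.commute)
    show ?thesis
    proof (cases "y = 0")
      case False then show ?thesis using Py by blast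
    next
      case True
      then have "P x0 = - (m *\<^sub>R x0)" unfolding y_def by (simp only: eq_neg_iff_add_eq_0)
      then have "Re (cinner (P x0) x0) = - m" using x0(1) by (simp add: cinner_minus_left cinner_scaleR_left cinner_self)
      then have "m = 0" using posP[of x0] m_nonneg[OF nt] by simp
      then have "P x0 = m *\<^sub>R x0" using x0 by simp
      moreover have "x0 \<noteq> 0" using x0 by auto
      ultimately show ?thesis by blast
    qed
  qed
  have eig_unit: "\<exists>x. norm x = 1 \<and> P x = m *\<^sub>R x" if "x \<noteq> 0" "P x = m *\<^sub>R x" for x
    using that by (intro exI[of _ "(1 / norm x) *\<^sub>R x"]) (simp add: P.scaleR)
  have part1: "has_N_star P \<longleftrightarrow> is_eigenvalue P (complex_of_real m)"
  proof
    assume "has_N_star P"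
    then obtain x0 where "norm x0 = 1" "norm (P x0) = m" unfolding N_iff by blast
    then have "\<exists>x. x \<noteq> 0 \<and> P x = m *\<^sub>R x" by (rule N_eig)
    then show "is_eigenvalue P (complex_of_real m)" unfolding eig_iff .
  next
    assume "is_eigenvalue P (complex_of_real m)"
    then obtain x where x: "x \<noteq> 0" "P x = m *\<^sub>R x" unfolding eig_iff by blast
    obtain u where u: "norm u = 1" "P u = m *\<^sub>R u" using eig_unit[OF x] by blast
    have "0 \<le> m" using m_nonneg u(1) by blast
    then have "norm (P u) = m" using u by simp
    then show "has_N_star P" unfolding N_iff using u(1) by blast
  qed
  have part2: "has_N_star P \<longleftrightarrow> complex_of_real m extreme_point_of numerical_range P"
  proof
    assume "has_N_star P"
    then have "is_eigenvalue P (complex_of_real m)" using part1 by simp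
    then obtain x where x: "x \<noteq> 0" "P x = m *\<^sub>R x" unfolding eig_iff by blast
    obtain u where u: "norm u = 1" "P u = m *\<^sub>R u" using eig_unit[OF x] by blast
    have nt: "\<exists>x::'a. norm x = 1" using u(1) by blast
    have "cinner (P u) u = complex_of_real m"
      using u by (simp add: cinner_scaleR_left cinner_self)
    then have mW: "complex_of_real m \<in> numerical_range P"
      unfolding numerical_range_def using u(1) by force
    have Wge: "\<And>w. w \<in> numerical_range P \<Longrightarrow> Im w = 0 \<and> m \<le> Re w"
    proof -
      fix w assume "w \<in> numerical_range P"
      then obtain z where z: "norm z = 1" "w = cinner (P z) z" unfolding numerical_range_def by blast
      have "w = complex_of_real (Re (cinner (P z) z))" using z(2) realP by metis
      then show "Im w = 0 \<and> m \<le> Re w" using Wbound[OF nt z(1)] by simp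
    qed
    show "complex_of_real m extreme_point_of numerical_range P"
      unfolding extreme_point_of_def
    proof (intro conjI ballI mW notI)
      fix a b assume a: "a \<in> numerical_range P" and b: "b \<in> numerical_range P"
        and "complex_of_real m \<in> open_segment a b"
      then obtain t where ab: "a \<noteq> b" "0 < t" "t < 1" "complex_of_real m = (1 - t) *\<^sub>R a + t *\<^sub>R b"
        unfolding in_segment by blast
      have ra: "Im a = 0" "m \<le> Re a" using Wge[OF a] by auto
      have rb: "Im b = 0" "m \<le> Re b" using Wge[OF b] by auto
      have "m = (1 - t) * Re a + t * Re b" using arg_cong[OF ab(4), of Re] by simp
      then have "(1 - t) * (Re a - m) + t * (Re b - m) = 0" by (simp add: algebra_simps)
      moreover have "(1 - t) * (Re a - m) \<ge> 0" "t * (Re b - m) \<ge> 0" using ab ra rb by simp_all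
      ultimately have "(1 - t) * (Re a - m) = 0" "t * (Re b - m) = 0" by linarith+
      then have "Re a = m" "Re b = m" using ab by simp_all
      then have "a = b" using ra rb by (simp add: complex_eq_iff)
      then show False using ab(1) by simp
    qed
  next
    assume "complex_of_real m extreme_point_of numerical_range P"
    then have "complex_of_real m \<in> numerical_range P" by (simp add: extreme_point_of_def)
    then obtain x0 where x0: "norm x0 = 1" "cinner (P x0) x0 = complex_of_real m"
      unfolding numerical_range_def by auto
    have nt: "\<exists>x::'a. norm x = 1" using x0(1) by blast
    have m0: "0 \<le> m" using m_nonneg[OF nt] .
    have m_hom: "m * (norm z)^2 \<le> Re (cinner (P z) z)" for z
    proof (cases "z = 0")
      case True then show ?thesis by simp
    next
      case False
      have "m \<le> Re (cinner (P ((1 / norm z) *\<^sub>R z)) ((1 / norm z) *\<^sub>R z))"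
        using Wbound[OF nt scale_unit[OF False]] .
      also have "\<dots> = Re (cinner (P z) z) / (norm z)^2"
        by (simp add: P.scaleR cinner_scaleR_left cinner_scaleR_right power2_eq_square)
      finally show ?thesis using False by (simp add: pos_le_divide_eq)
    qed
    define Q where "Q = (\<lambda>z. P z - m *\<^sub>R z)"
    have blQ: "bounded_linear Q" unfolding Q_def
      by (intro bounded_linear_sub bl bounded_linear_scaleR_right bounded_linear_ident)
    have ReQ: "Re (cinner (Q z) z) = Re (cinner (P z) z) - m * (norm z)^2" for z
      by (simp add: Q_def cinner_diff_left cinner_scaleR_left cinner_self)
    have "(norm (Q x0))^2 \<le> (B + 1) * Re (cinner (Q x0) x0)"
    proof (rule pos_bound[OF blQ])
      show "cinner (Q u) v = cinner u (Q v)" for u v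
        by (simp add: Q_def cinner_diff_left cinner_diff_right cinner_scaleR_left cinner_scaleR_right sa)
      show "0 \<le> Re (cinner (Q z) z)" for z using m_hom[of z] ReQ[of z] by simp
      show "Re (cinner (Q z) z) \<le> (B + 1) * (norm z)^2" for z
      proof -
        have "0 \<le> m * (norm z)^2" using m0 by simp
        moreover have "B * (norm z)^2 \<le> (B + 1) * (norm z)^2" by (rule mult_right_mono) simp_all
        ultimately show ?thesis using ReQ[of z] ReP_le[of z] by linarith
      qed
      show "B + 1 > 0" using B by simp
    qed
    also have "Re (cinner (Q x0) x0) = 0" using ReQ[of x0] x0 by simp
    finally have "Q x0 = 0" by simp
    then have "P x0 = m *\<^sub>R x0" by (simp add: Q_def)
    then have "norm (P x0) = m" using x0(1) m0 by simp
    then show "has_N_star P" unfolding N_iff using x0(1) by blast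
  qed
  show ?thesis using part1 part2 by (simp add: m_def)
qed

end
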